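(* Let $m\ge0$, let $f:\mathbb{R}^n\to\mathbb{R}$ be $m$-weakly convex with $f^\star:=\inf_x f(x)>-\infty$, and let $\beta\in(0,1)$, $\rho>0$, $\alpha=m+\rho$, $x_1\in\mathbb{R}^n$. Suppose the sequence $(x_k)_{k\ge1}$ is generated as follows: for each $k\ge1$ there is a convex function $\tilde f_k:\mathbb{R}^n\to\mathbb{R}$ with $\tilde f_k(x)\le f(x)+\frac m2\|x-x_k\|^2$ for all $x$, such that $x_{k+1}=\arg\min_x\{\tilde f_k(x)+\frac\rho2\|x-x_k\|^2\}$ and $$f(x_k)-\Big(f(x_{k+1})+\frac m2\|x_{k+1}-x_k\|^2\Big)\ge\beta\big(f(x_k)-\tilde f_k(x_{k+1})\big).$$ Let $\eta>0$, $\epsilon>0$. If $T$ is an integer with $$T\ge \frac{2\alpha^2(f(x_1)-f^\star)}{m+\beta\rho}\cdot\frac1{\eta^2}+\frac{(1-\beta)(f(x_1)-f^\star)}{\beta}\cdot\frac1\epsilon+1,$$ then at least one of $x_2,\dots,x_{T+1}$ is an $(\eta,\epsilon)$-inexact stationary point of $f$.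
   Context: A function $f$ is $m$-weakly convex ($m\ge 0$) if $x\mapsto f(x)+\frac{m}{2}\|x\|^2$ is convex. For $\epsilon\ge 0$, the $\epsilon$-inexact subdifferential at $x$ is $\partial_\epsilon f(x)=\{v\in\mathbb{R}^n: f(y)\ge f(x)+\langle v,y-x\rangle-\frac{m}{2}\|y-x\|^2-\epsilon\ \ \forall y\in\mathbb{R}^n\}$. A point $x$ is an $(\eta,\epsilon)$-inexact stationary point if $\mathrm{dist}(0,\partial_\epsilon f(x))\le\eta$. *)

theory Defs
  imports "HOL-Analysis.Analysis"
begin

definition weakly_convex :: "real \<Rightarrow> ('a::real_inner \<Rightarrow> real) \<Rightarrow> bool" where
  "weakly_convex m f \<longleftrightarrow> m \<ge> 0 \<and> convex_on UNIV (\<lambda>x. f x + m / 2 * (norm x)\<^sup>2)"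

definition inexact_subdiff :: "real \<Rightarrow> real \<Rightarrow> ('a::real_inner \<Rightarrow> real) \<Rightarrow> 'a \<Rightarrow> 'a set" where
  "inexact_subdiff m \<epsilon> f x =
     {v. \<forall>y. f y \<ge> f x + inner v (y - x) - m / 2 * (norm (y - x))\<^sup>2 - \<epsilon>}"

text \<open>dist(0, S) <= eta, with the convention dist(0, {}) = +infinity\<close>
definition inexact_stationary :: "real \<Rightarrow> real \<Rightarrow> real \<Rightarrow> ('a::real_inner \<Rightarrow> real) \<Rightarrow> 'a \<Rightarrow> bool" where
  "inexact_stationary m \<eta> \<epsilon> f x \<longleftrightarrow>
     inexact_subdiff m \<epsilon> f x \<noteq> {} \<and> infdist 0 (inexact_subdiff m \<epsilon> f x) \<le> \<eta>"

end

theory Submission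
  imports Defs
begin

lemma lim_arg:
  fixes A B C :: real
  assumes "C \<ge> 0" "\<And>t. 0 < t \<Longrightarrow> t < 1 \<Longrightarrow> A \<le> B + t * C"
  shows "A \<le> B"
proof (rule ccontr)
  assume "\<not> A \<le> B"
  define t where "t = min (1/2) ((A - B) / (2 * (C + 1)))"
  have t0: "0 < t" "t < 1" using \<open>\<not> A \<le> B\<close> assms(1) by (auto simp: t_def)
  have "t * C \<le> (A - B) / (2 * (C + 1)) * C"
    using assms(1) by (intro mult_right_mono) (auto simp: t_def)
  also have "\<dots> < A - B"
  proof -
    have q: "C / (2 * (C + 1)) < 1" using assms(1) by (simp add: field_simps)
    have "(A - B) / (2 * (C + 1)) * C = (A - B) * (C / (2 * (C + 1)))" by simp
    also have "\<dots> < (A - B) * 1" using q \<open>\<not> A \<le> B\<close> by (intro mult_strict_left_mono) auto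
    finally show ?thesis by simp
  qed
  finally show False using assms(2)[OF t0] by linarith
qed

lemma norm_add_sq:
  fixes u w :: "'a::real_inner"
  shows "(norm (u + w))\<^sup>2 = (norm u)\<^sup>2 + 2 * inner u w + (norm w)\<^sup>2"
  by (simp add: power2_norm_eq_inner inner_add_left inner_add_right inner_commute)

lemma prox_subgrad:
  fixes g :: "'a::real_inner \<Rightarrow> real"
  assumes cvx: "convex_on UNIV g" and rho: "\<rho> > 0"
    and min: "\<And>y. g xs + \<rho> / 2 * (norm (xs - c))\<^sup>2 \<le> g y + \<rho> / 2 * (norm (y - c))\<^sup>2"
  shows "g y \<ge> g xs + \<rho> * inner (c - xs) (y - xs)"
proof -
  define w where "w = y - xs"
  have "g xs \<le> (g y - \<rho> * inner (xs - c) w * (-1)) + t * (\<rho> / 2 * (norm w)\<^sup>2)"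
    if t: "0 < t" "t < 1" for t
  proof -
    have eq: "(1 - t) *\<^sub>R xs + t *\<^sub>R y = xs + t *\<^sub>R w"
      by (simp add: w_def algebra_simps)
    have c1: "g (xs + t *\<^sub>R w) \<le> (1 - t) * g xs + t * g y"
      using convex_onD[OF cvx, of t xs y] t eq by simp
    have c2: "g xs + \<rho> / 2 * (norm (xs - c))\<^sup>2 \<le> g (xs + t *\<^sub>R w) + \<rho> / 2 * (norm (xs + t *\<^sub>R w - c))\<^sup>2"
      by (rule min)
    have "(norm (xs + t *\<^sub>R w - c))\<^sup>2 = (norm (xs - c))\<^sup>2 + 2 * t * inner (xs - c) w + t\<^sup>2 * (norm w)\<^sup>2"
      using norm_add_sq[of "xs - c" "t *\<^sub>R w"] by (simp add: algebra_simps power2_eq_square)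
    hence "\<rho> / 2 * (norm (xs + t *\<^sub>R w - c))\<^sup>2 = \<rho> / 2 * ((norm (xs - c))\<^sup>2 + 2 * t * inner (xs - c) w + t\<^sup>2 * (norm w)\<^sup>2)"
      by (simp only:)
    also have "\<dots> = \<rho> / 2 * (norm (xs - c))\<^sup>2 + \<rho> * t * inner (xs - c) w + \<rho> / 2 * t\<^sup>2 * (norm w)\<^sup>2"
      by (simp add: ring_distribs)
    finally have sq: "\<rho> / 2 * (norm (xs + t *\<^sub>R w - c))\<^sup>2 = \<rho> / 2 * (norm (xs - c))\<^sup>2 + \<rho> * t * inner (xs - c) w + \<rho> / 2 * t\<^sup>2 * (norm w)\<^sup>2" .
    have "t * g xs \<le> t * g y + \<rho> * t * inner (xs - c) w + \<rho> / 2 * t\<^sup>2 * (norm w)\<^sup>2"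
    proof -
      have aux: "\<And>a P z Q R1 R2 b::real. a + P \<le> z + Q \<Longrightarrow> Q = P + R1 + R2 \<Longrightarrow> z \<le> (1-t)*a + t*b \<Longrightarrow> t*a \<le> t*b + R1 + R2"
        by (simp add: algebra_simps)
      show ?thesis by (rule aux[OF c2 sq c1])
    qed
    hence "t * g xs \<le> t * (g y + \<rho> * inner (xs - c) w + t * (\<rho> / 2 * (norm w)\<^sup>2))"
      by (simp add: algebra_simps power2_eq_square)
    hence "g xs \<le> g y + \<rho> * inner (xs - c) w + t * (\<rho> / 2 * (norm w)\<^sup>2)"
      using t by simp
    thus ?thesis by simp
  qed
  moreover have "0 \<le> \<rho> / 2 * (norm w)\<^sup>2" using rho by simp
  ultimately have "g xs \<le> g y - \<rho> * inner (xs - c) w * (-1)"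
    using lim_arg by blast
  thus ?thesis by (simp add: w_def inner_diff_left algebra_simps)
qed

theorem mainTheorem6:
  fixes f :: "'a::euclidean_space \<Rightarrow> real"
    and ft :: "nat \<Rightarrow> 'a \<Rightarrow> real"
    and x :: "nat \<Rightarrow> 'a"
    and m \<beta> \<rho> \<eta> \<epsilon> :: real
    and T :: nat
  assumes m: "m \<ge> 0"
    and wc: "weakly_convex m f"
    and bdd: "bdd_below (range f)"
    and beta: "0 < \<beta>" "\<beta> < 1"
    and rho: "\<rho> > 0"
    and ft_convex: "\<And>k. k \<ge> 1 \<Longrightarrow> convex_on UNIV (ft k)"
    and ft_le: "\<And>k y. k \<ge> 1 \<Longrightarrow> ft k y \<le> f y + m / 2 * (norm (y - x k))\<^sup>2"
    and argmin: "\<And>k y. k \<ge> 1 \<Longrightarrow>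
        ft k (x (Suc k)) + \<rho> / 2 * (norm (x (Suc k) - x k))\<^sup>2
          \<le> ft k y + \<rho> / 2 * (norm (y - x k))\<^sup>2"
    and descent: "\<And>k. k \<ge> 1 \<Longrightarrow>
        f (x k) - (f (x (Suc k)) + m / 2 * (norm (x (Suc k) - x k))\<^sup>2)
          \<ge> \<beta> * (f (x k) - ft k (x (Suc k)))"
    and eta: "\<eta> > 0" and eps: "\<epsilon> > 0"
    and T: "real T \<ge> 2 * (m + \<rho>)\<^sup>2 * (f (x 1) - Inf (range f)) / (m + \<beta> * \<rho>) * (1 / \<eta>\<^sup>2)
                 + (1 - \<beta>) * (f (x 1) - Inf (range f)) / \<beta> * (1 / \<epsilon>) + 1"
  shows "\<exists>k\<in>{2..T+1}. inexact_stationary m \<eta> \<epsilon> f (x k)"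
proof (rule ccontr)
  assume nst: "\<not> (\<exists>k\<in>{2..T+1}. inexact_stationary m \<eta> \<epsilon> f (x k))"
  define \<alpha> where "\<alpha> = m + \<rho>"
  define N where "N k = (norm (x (Suc k) - x k))\<^sup>2" for k
  define D where "D k = f (x k) - f (x (Suc k))" for k
  define e where "e k = f (x (Suc k)) + m / 2 * N k - ft k (x (Suc k))" for k
  define c1 where "c1 = (m + \<beta> * \<rho>) * \<eta>\<^sup>2 / (2 * \<alpha>\<^sup>2)"
  define c2 where "c2 = \<beta> * \<epsilon> / (1 - \<beta>)"
  define \<Delta> where "\<Delta> = f (x 1) - Inf (range f)"
  have al: "\<alpha> > 0" using m rho by (simp add: \<alpha>_def)
  have mb: "m + \<beta> * \<rho> > 0" proof -
    have "\<beta> * \<rho> > 0" using beta rho by simp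
    thus ?thesis using m by linarith
  qed
  have c1p: "c1 > 0" unfolding c1_def using mb eta al by (intro divide_pos_pos mult_pos_pos) auto
  have c2p: "c2 > 0" unfolding c2_def using beta eps by simp
  have subd: "\<alpha> *\<^sub>R (x k - x (Suc k)) \<in> inexact_subdiff m (e k) f (x (Suc k))" if k: "k \<ge> 1" for k
    unfolding inexact_subdiff_def
  proof (intro CollectI allI)
    fix y
    define xs where "xs = x (Suc k)"
    define a where "a = y - xs"
    define I where "I = inner (x k - xs) a"
    have s1: "ft k y \<ge> ft k xs + \<rho> * I"
      unfolding I_def a_def xs_def
      by (rule prox_subgrad[OF ft_convex[OF k] rho]) (rule argmin[OF k])
    have s2: "ft k y \<le> f y + m / 2 * (norm (y - x k))\<^sup>2" by (rule ft_le[OF k])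
    have "(norm (y - x k))\<^sup>2 = (norm (a + (xs - x k)))\<^sup>2" by (simp add: a_def)
    also have "\<dots> = (norm a)\<^sup>2 + 2 * inner a (xs - x k) + (norm (xs - x k))\<^sup>2" by (rule norm_add_sq)
    also have "inner a (xs - x k) = - I" unfolding I_def
      by (simp add: inner_commute inner_diff_left inner_diff_right)
    finally have s3: "(norm (y - x k))\<^sup>2 = (norm a)\<^sup>2 - 2 * I + N k" by (simp add: N_def xs_def)
    have s4: "inner (\<alpha> *\<^sub>R (x k - xs)) a = m * I + \<rho> * I"
      by (simp add: I_def \<alpha>_def algebra_simps)
    have s5: "m / 2 * (norm (y - x k))\<^sup>2 = m / 2 * (norm a)\<^sup>2 - m * I + m / 2 * N k"
      unfolding s3 by (simp add: algebra_simps)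
    show "f y \<ge> f (x (Suc k)) + inner (\<alpha> *\<^sub>R (x k - x (Suc k))) (y - x (Suc k))
              - m / 2 * (norm (y - x (Suc k)))\<^sup>2 - e k"
      using s1 s2 s4 s5 unfolding e_def xs_def[symmetric] a_def[symmetric] by linarith
  qed
  have Dk: "D k * (1 / c1 + 1 / c2) \<ge> 1" if k: "k \<ge> 1" "k \<le> T" for k
  proof -
    have ftk: "ft k (x k) \<le> f (x k)" using ft_le[OF k(1), of "x k"] by simp
    have am: "ft k (x (Suc k)) + \<rho> / 2 * N k \<le> ft k (x k)"
      using argmin[OF k(1), of "x k"] by (simp add: N_def)
    have de: "D k - m / 2 * N k \<ge> \<beta> * (f (x k) - ft k (x (Suc k)))"
      using descent[OF k(1)] by (simp add: D_def N_def)
    have b1: "\<beta> * (f (x k) - ft k (x (Suc k))) \<ge> \<beta> * (\<rho> / 2 * N k)"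
      using ftk am beta by (intro mult_left_mono) auto
    have Nn: "N k \<ge> 0" by (simp add: N_def)
    have Db: "D k \<ge> (m + \<beta> * \<rho>) / 2 * N k"
      using de b1 by (simp add: algebra_simps)
    have "(m + \<beta> * \<rho>) / 2 * N k \<ge> 0" using mb Nn by simp
    hence Dn: "D k \<ge> 0" using Db by linarith
    have De: "D k - m / 2 * N k \<ge> \<beta> * (D k - m / 2 * N k + e k)"
      using de unfolding D_def e_def by (simp add: algebra_simps)
    moreover have "\<beta> * (D k - m / 2 * N k + e k) = \<beta> * (D k - m / 2 * N k) + \<beta> * e k"
      by (simp add: distrib_left)
    moreover have "(1 - \<beta>) * (D k - m / 2 * N k) = (D k - m / 2 * N k) - \<beta> * (D k - m / 2 * N k)"
      by (simp add: left_diff_distrib)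
    ultimately have De2: "(1 - \<beta>) * (D k - m / 2 * N k) \<ge> \<beta> * e k"
      by linarith
    have "inexact_stationary m \<eta> \<epsilon> f (x (Suc k)) \<Longrightarrow> False"
      using nst k by auto
    hence "\<not> (norm (\<alpha> *\<^sub>R (x k - x (Suc k))) \<le> \<eta> \<and> e k \<le> \<epsilon>)"
    proof (intro notI)
      assume ns: "inexact_stationary m \<eta> \<epsilon> f (x (Suc k)) \<Longrightarrow> False"
        and h: "norm (\<alpha> *\<^sub>R (x k - x (Suc k))) \<le> \<eta> \<and> e k \<le> \<epsilon>"
      have mem: "\<alpha> *\<^sub>R (x k - x (Suc k)) \<in> inexact_subdiff m \<epsilon> f (x (Suc k))"
        unfolding inexact_subdiff_def
      proof (intro CollectI allI)
        fix y
        have "f y \<ge> f (x (Suc k)) + inner (\<alpha> *\<^sub>R (x k - x (Suc k))) (y - x (Suc k))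
              - m / 2 * (norm (y - x (Suc k)))\<^sup>2 - e k"
          using subd[OF k(1)] unfolding inexact_subdiff_def by blast
        thus "f y \<ge> f (x (Suc k)) + inner (\<alpha> *\<^sub>R (x k - x (Suc k))) (y - x (Suc k))
              - m / 2 * (norm (y - x (Suc k)))\<^sup>2 - \<epsilon>" using h by linarith
      qed
      have "infdist 0 (inexact_subdiff m \<epsilon> f (x (Suc k))) \<le> \<eta>"
        using infdist_le2[OF mem] h by simp
      with mem show False using ns unfolding inexact_stationary_def by blast
    qed
    hence "norm (\<alpha> *\<^sub>R (x k - x (Suc k))) > \<eta> \<or> e k > \<epsilon>" by linarith
    thus ?thesis
    proof
      assume h: "norm (\<alpha> *\<^sub>R (x k - x (Suc k))) > \<eta>"
      have "\<alpha> * sqrt (N k) > \<eta>" using h al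
        by (simp add: N_def norm_minus_commute)
      hence "(\<alpha> * sqrt (N k))\<^sup>2 > \<eta>\<^sup>2" using eta by (intro power_strict_mono) auto
      hence "\<alpha>\<^sup>2 * N k > \<eta>\<^sup>2" using Nn by (simp add: power_mult_distrib)
      hence "N k > \<eta>\<^sup>2 / \<alpha>\<^sup>2" using al by (simp add: field_simps)
      hence "(m + \<beta> * \<rho>) / 2 * N k \<ge> (m + \<beta> * \<rho>) / 2 * (\<eta>\<^sup>2 / \<alpha>\<^sup>2)"
        using m beta rho by (intro mult_left_mono) auto
      moreover have "c1 = (m + \<beta> * \<rho>) / 2 * (\<eta>\<^sup>2 / \<alpha>\<^sup>2)" unfolding c1_def by simp
      ultimately have "D k \<ge> c1" using Db by linarith
      hence "D k / c1 \<ge> 1" using c1p by simp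
      moreover have "D k / c2 \<ge> 0" using Dn c2p by simp
      ultimately show ?thesis by (simp add: algebra_simps)
    next
      assume h: "e k > \<epsilon>"
      have p: "(1 - \<beta>) * (m / 2 * N k) \<ge> 0" using beta m Nn by simp
      have q: "(1 - \<beta>) * D k = (1 - \<beta>) * (D k - m / 2 * N k) + (1 - \<beta>) * (m / 2 * N k)"
        by (simp add: algebra_simps)
      have "(1 - \<beta>) * D k \<ge> \<beta> * e k"
        using De2 p q by linarith
      also have "\<beta> * e k \<ge> \<beta> * \<epsilon>" using h beta by simp
      finally have "D k \<ge> c2" using beta unfolding c2_def by (simp add: field_simps)
      hence "D k / c2 \<ge> 1" using c2p by simp
      moreover have "D k / c1 \<ge> 0" using Dn c1p by simp
      ultimately show ?thesis by (simp add: algebra_simps)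
    qed
  qed
  have tele: "(\<Sum>k=1..T. D k) = f (x 1) - f (x (T + 1))"
    by (induction T) (simp_all add: D_def)
  have inf: "Inf (range f) \<le> f (x (T + 1))" using bdd by (simp add: cInf_lower)
  have "real T = (\<Sum>k=1..T. 1::real)" by simp
  also have "\<dots> \<le> (\<Sum>k=1..T. D k * (1 / c1 + 1 / c2))" using Dk by (intro sum_mono) auto
  also have "\<dots> = (f (x 1) - f (x (T + 1))) * (1 / c1 + 1 / c2)"
    by (subst sum_distrib_right[symmetric]) (simp only: tele)
  also have "\<dots> \<le> \<Delta> * (1 / c1 + 1 / c2)"
    using inf c1p c2p unfolding \<Delta>_def by (intro mult_right_mono) auto
  also have "\<dots> = 2 * (m + \<rho>)\<^sup>2 * (f (x 1) - Inf (range f)) / (m + \<beta> * \<rho>) * (1 / \<eta>\<^sup>2)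
                 + (1 - \<beta>) * (f (x 1) - Inf (range f)) / \<beta> * (1 / \<epsilon>)"
    unfolding \<Delta>_def c1_def c2_def \<alpha>_def using c1p c2p beta eps eta m rho
    by (simp add: field_simps)
  finally show False using T by linarith
qed

end
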